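(* Let $m = p + 12k$ with $k \geq 0$ an integer and $p \in \{11,13,17,19\}$. Suppose $(X, Y, P_0, Q_0)$ is a type-1 basic set of dipaths of $G_{2m}$. For $j \in \{1,\dots,k-1\}$ let $P_j = \rho^{12j}(P_0)$ and $Q_j = \rho^{12j}(Q_0)$. Then $C^0 = X P_0 P_1 \cdots P_{k-1}$ and $C^1 = Y Q_0 Q_1 \cdots Q_{k-1}$ are type-1 directed $m$-cycles of $G_{2m}$, and $C^0 \cup C^1$ is a $\vec{C}_m$-factor of $G_{2m}$.
   Context: Let $m$ be odd. $G_{2m} = \vec{X}(m,\{1,3\}) \wr K^*_2$ is the digraph with vertex set $\{x_a, y_a : a \in \mathbb{Z}_m\}$ whose arcs are: $(u_a, v_b)$ for all $u,v \in \{x,y\}$ and $a,b$ with $b-a \equiv 1$ or $3 \pmod m$, together with $(x_a,y_a)$ and $(y_a,x_a)$ for all $a$. An arc from a vertex with subscript $a$ to one with subscript $b$ has difference equal to the representative of $b-a$ in $\{0,1,\dots,m-1\}$. A type-$k$ cycle is a directed $m$-cycle whose arc differences sum (as integers) to $km$. The map $\rho$ sends $x_i \mapsto x_{i+1}$, $y_i \mapsto y_{i+1}$ (subscripts mod $m$), applied vertexwise to dipaths. For a dipath $P$: $s(P)$ is its first vertex, $t(P)$ its last vertex, $\mathrm{len}(P)$ its number of arcs (a dipath of length $0$ is a single vertex); $PQ$ denotes concatenation when $t(P)=s(Q)$. With $m = p+12k$, set $V_0 = \{x_j, y_j : 0 \le j \le p-1\}$ and, for $1 \le i \le k$, $V_i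 = \{x_j, y_j : p+12(i-1) \le j \le p+12i-1\}$. A 4-tuple $(X,Y,R,S)$ of dipaths (or, when $k=0$, closed dipaths) of $G_{2m}$ is a type-1 basic set of dipaths if: (C1) $R$ and $S$ are vertex-disjoint; if $k\ge1$ then $X$ and $Y$ are vertex-disjoint dipaths, while if $k=0$ they are vertex-disjoint type-1 directed cycles; (C2) $s(X)=\rho^{-p}(t(X))$ and $s(Y)=\rho^{-p}(t(Y))$; (C3) $\mathrm{len}(X)=\mathrm{len}(Y)=p$; $\mathrm{len}(R)=\mathrm{len}(S)=12$ if $k\ge1$ and $\mathrm{len}(R)=\mathrm{len}(S)=0$ if $k=0$; (C4) each of $X,Y$ has its source and internal vertices in $V_0$ and its terminal vertex equal to $x_t$ or $y_t$ for some $t\in\{p,p+1,p+2\}$; (C5) $t(X)=s(R)$ and $t(Y)=s(S)$; (C6) if $k\ge1$ and $P\in\{R,S\}$ has $s(P)=x_t$ (resp. $y_t$), then $t(P)=x_{t+12}$ (resp. $y_{t+12}$), and all internal vertices of $P$ lie in $V_1$. A $\vec{C}_m$-factor is a spanning subdigraph that is a disjoint union of directed $m$-cycles. *)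

theory Defs
  imports Main
begin

text \<open>Vertices of G_{2m}: (True, a) is x_a, (False, a) is y_a, with a an integer
  representative in {0..m-1}.  Dipaths are nonempty vertex lists.\<close>

type_synonym vtx = "bool \<times> int"

definition verts :: "int \<Rightarrow> vtx set" where
  "verts m = {v. 0 \<le> snd v \<and> snd v < m}"

definition adiff :: "int \<Rightarrow> vtx \<Rightarrow> vtx \<Rightarrow> int" where
  "adiff m u v = (snd v - snd u) mod m"

definition arc :: "int \<Rightarrow> vtx \<Rightarrow> vtx \<Rightarrow> bool" where
  "arc m u v \<longleftrightarrow> u \<in> verts m \<and> v \<in> verts m \<and>
     ((snd v - snd u) mod m \<in> {1, 3} \<or> (snd u = snd v \<and> fst u \<noteq> fst v))"

definition arcs_ok :: "int \<Rightarrow> vtx list \<Rightarrow> bool" where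
  "arcs_ok m P \<longleftrightarrow> (\<forall>i. Suc i < length P \<longrightarrow> arc m (P ! i) (P ! Suc i))"

definition dipath :: "int \<Rightarrow> vtx list \<Rightarrow> bool" where
  "dipath m P \<longleftrightarrow> P \<noteq> [] \<and> set P \<subseteq> verts m \<and> distinct P \<and> arcs_ok m P"

definition len :: "vtx list \<Rightarrow> nat" where
  "len P = length P - 1"

definition dcycle :: "int \<Rightarrow> vtx list \<Rightarrow> bool" where
  "dcycle m C \<longleftrightarrow> int (length C) = m + 1 \<and> hd C = last C \<and> set C \<subseteq> verts m
     \<and> distinct (tl C) \<and> arcs_ok m C"

definition diff_sum :: "int \<Rightarrow> vtx list \<Rightarrow> int" where
  "diff_sum m C = (\<Sum>i<length C - 1. adiff m (C ! i) (C ! Suc i))"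

definition type_cycle :: "int \<Rightarrow> int \<Rightarrow> vtx list \<Rightarrow> bool" where
  "type_cycle m t C \<longleftrightarrow> dcycle m C \<and> diff_sum m C = t * m"

definition rho_pow :: "int \<Rightarrow> int \<Rightarrow> vtx list \<Rightarrow> vtx list" where
  "rho_pow m n P = map (\<lambda>(b, i). (b, (i + n) mod m)) P"

definition rhov :: "int \<Rightarrow> int \<Rightarrow> vtx \<Rightarrow> vtx" where
  "rhov m n v = (fst v, (snd v + n) mod m)"

text \<open>concatenation PQ (for t(P) = s(Q))\<close>
definition cat :: "vtx list \<Rightarrow> vtx list \<Rightarrow> vtx list" where
  "cat P Q = P @ tl Q"

definition Vblock :: "int \<Rightarrow> int \<Rightarrow> nat \<Rightarrow> vtx set" where
  "Vblock m p i = (if i = 0 then {v. 0 \<le> snd v \<and> snd v \<le> p - 1}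
      else {v. p + 12 * (int i - 1) \<le> snd v \<and> snd v \<le> p + 12 * int i - 1})"

definition type1_basic_set :: "int \<Rightarrow> int \<Rightarrow> nat \<Rightarrow> vtx list \<Rightarrow> vtx list \<Rightarrow> vtx list \<Rightarrow> vtx list \<Rightarrow> bool" where
  "type1_basic_set m p k X Y R S \<longleftrightarrow>
     \<comment> \<open>C1 (together with the requirement that all four are (closed) dipaths)\<close>
     dipath m R \<and> dipath m S \<and> set R \<inter> set S = {} \<and>
     (k \<ge> 1 \<longrightarrow> dipath m X \<and> dipath m Y \<and> set X \<inter> set Y = {}) \<and>
     (k = 0 \<longrightarrow> type_cycle m 1 X \<and> type_cycle m 1 Y \<and> set X \<inter> set Y = {}) \<and>
     \<comment> \<open>C2\<close>
     X \<noteq> [] \<and> Y \<noteq> [] \<and>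
     hd X = rhov m (- p) (last X) \<and> hd Y = rhov m (- p) (last Y) \<and>
     \<comment> \<open>C3\<close>
     int (len X) = p \<and> int (len Y) = p \<and>
     (k \<ge> 1 \<longrightarrow> len R = 12 \<and> len S = 12) \<and>
     (k = 0 \<longrightarrow> len R = 0 \<and> len S = 0) \<and>
     \<comment> \<open>C4\<close>
     (\<forall>P \<in> {X, Y}. set (butlast P) \<subseteq> Vblock m p 0 \<and>
        snd (last P) \<in> {p mod m, (p + 1) mod m, (p + 2) mod m}) \<and>
     \<comment> \<open>C5\<close>
     last X = hd R \<and> last Y = hd S \<and>
     \<comment> \<open>C6\<close>
     (k \<ge> 1 \<longrightarrow> (\<forall>P \<in> {R, S}. last P = rhov m 12 (hd P) \<and>
        set (butlast (tl P)) \<subseteq> Vblock m p 1))"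

definition Cm_factor :: "int \<Rightarrow> vtx list list \<Rightarrow> bool" where
  "Cm_factor m Cs \<longleftrightarrow> (\<forall>C \<in> set Cs. dcycle m C) \<and>
     (\<forall>i j. i < length Cs \<and> j < length Cs \<and> i \<noteq> j \<longrightarrow> set (Cs ! i) \<inter> set (Cs ! j) = {}) \<and>
     (\<Union>C \<in> set Cs. set C) = verts m"

end

theory Submission
  imports Defs
begin


lemma foldl_cat: "foldl cat A Qs = A @ concat (map tl Qs)"
  by (induction Qs arbitrary: A) (auto simp: cat_def)

lemma rho_pow_nth: "r < length P \<Longrightarrow> rho_pow m a P ! r = rhov m a (P ! r)"
  by (cases "P ! r") (simp add: rho_pow_def rhov_def)

lemma rho_pow_len[simp]: "length (rho_pow m a P) = length P"
  by (simp add: rho_pow_def)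

lemma rhov_verts: "m > 0 \<Longrightarrow> rhov m a v \<in> verts m"
  by (simp add: rhov_def verts_def)

lemma rhov_add: "rhov m a (rhov m c v) = rhov m (a + c) v"
  by (simp add: rhov_def mod_add_right_eq add.commute add.left_commute)

lemma rhov_0: "v \<in> verts m \<Longrightarrow> rhov m 0 v = v"
  by (cases v) (simp add: rhov_def verts_def)

lemma rhov_arc: assumes "arc m u v" shows "arc m (rhov m a u) (rhov m a v)"
proof -
  have m: "m > 0" using assms by (auto simp: arc_def verts_def)
  have e: "((snd v + a) mod m - (snd u + a) mod m) mod m = (snd v - snd u) mod m"
    by (simp add: mod_diff_eq)
  have "snd u = snd v \<Longrightarrow> (snd u + a) mod m = (snd v + a) mod m" by simp
  then show ?thesis using assms m e unfolding arc_def
    by (auto simp: rhov_def verts_def)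
qed

lemma arc_desc: assumes "arc m u v" "snd v < snd u" shows "snd u - snd v \<ge> m - 3"
proof -
  have uv: "0 \<le> snd u" "snd u < m" "0 \<le> snd v" "snd v < m" using assms by (auto simp: arc_def verts_def)
  have "(snd v - snd u) mod m = snd v - snd u + m"
  proof -
    have "(snd v - snd u) mod m = (snd v - snd u + m) mod m" by simp
    also have "\<dots> = snd v - snd u + m" using uv assms(2) by (intro mod_pos_pos_trivial) auto
    finally show ?thesis .
  qed
  moreover have "(snd v - snd u) mod m \<in> {1,3}" using assms by (auto simp: arc_def)
  ultimately show ?thesis by auto
qed

lemma adiff_eq: assumes "u \<in> verts m" "v \<in> verts m"
  shows "adiff m u v = snd v - snd u + (if snd v < snd u then m else 0)"
proof -
  have uv: "0 \<le> snd u" "snd u < m" "0 \<le> snd v" "snd v < m" using assms by (auto simp: verts_def)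
  show ?thesis
  proof (cases "snd v < snd u")
    case True
    have "(snd v - snd u) mod m = (snd v - snd u + m) mod m" by simp
    also have "\<dots> = snd v - snd u + m" using uv True by (intro mod_pos_pos_trivial) auto
    finally show ?thesis using True by (simp add: adiff_def)
  next
    case False
    then show ?thesis using uv by (simp add: adiff_def mod_pos_pos_trivial)
  qed
qed

lemma card_verts: "m > 0 \<Longrightarrow> card (verts m) = 2 * nat m"
proof -
  have "verts m = UNIV \<times> {0..<m}" by (auto simp: verts_def)
  then show ?thesis by (simp add: card_cartesian_product)
qed

lemma cyc_set_tl: assumes "dcycle m A" "m > 0" shows "set A = set (tl A)" "card (set A) = nat m"
proof -
  have len: "length A = nat m + 1" using assms by (auto simp: dcycle_def)
  then obtain a as where A: "A = a # as" by (cases A) auto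
  have ne: "as \<noteq> []" using len A assms by auto
  have "a = last as" using assms A ne by (auto simp: dcycle_def)
  then have "a \<in> set as" using ne by simp
  then show "set A = set (tl A)" using A by auto
  show "card (set A) = nat m" using \<open>set A = set (tl A)\<close> assms len
    by (auto simp: dcycle_def distinct_card)
qed

lemma factor2: assumes "dcycle m A" "dcycle m B" "set A \<inter> set B = {}" "m > 0"
  shows "Cm_factor m [A, B]"
proof -
  have sub: "set A \<union> set B \<subseteq> verts m" using assms by (auto simp: dcycle_def)
  have fin: "finite (verts m)" by (simp add: verts_def) (rule finite_subset[of _ "UNIV \<times> {0..<m}"], auto)
  have "card (set A \<union> set B) = 2 * nat m"
    using assms cyc_set_tl[OF assms(1,4)] cyc_set_tl[OF assms(2,4)] by (simp add: card_Un_disjoint)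
  then have "set A \<union> set B = verts m"
    using card_subset_eq[OF fin sub] card_verts[OF assms(4)] by simp
  moreover have "\<forall>i j. i < 2 \<and> j < 2 \<and> i \<noteq> j \<longrightarrow> set ([A,B] ! i) \<inter> set ([A,B] ! j) = {}"
    using assms(3) by (auto simp: less_2_cases_iff)
  ultimately show ?thesis using assms unfolding Cm_factor_def by auto
qed

lemma suc_div12a: "(q::nat) mod 12 < 11 \<Longrightarrow> (Suc q) div 12 = q div 12 \<and> Suc q mod 12 = Suc (q mod 12)"
  by (simp add: div_Suc mod_Suc)
lemma suc_div12b: "(q::nat) mod 12 = 11 \<Longrightarrow> (Suc q) div 12 = Suc (q div 12) \<and> Suc q mod 12 = 0" by (simp add: div_Suc mod_Suc)



locale cyc =
  fixes m p :: int and n k :: nat and X P0 :: "vtx list" and b :: bool and t :: int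
  assumes pn: "p = int n" and n11: "11 \<le> n" and k1: "1 \<le> k" and mdef: "m = p + 12 * int k"
  and Xd: "dipath m X" and Xlen: "length X = n + 1"
  and Xlow: "\<And>i. i < n \<Longrightarrow> 0 \<le> snd (X!i) \<and> snd (X!i) \<le> p - 1"
  and Xn: "X ! n = (b, t)" and tlo: "p \<le> t" and thi: "t \<le> p + 2"
  and X0: "X ! 0 = (b, t - p)"
  and Pd: "dipath m P0" and Plen: "length P0 = 13" and P00: "P0 ! 0 = (b, t)"
  and P12: "P0 ! 12 = rhov m 12 (P0 ! 0)"
  and Pmid: "\<And>r. 1 \<le> r \<Longrightarrow> r \<le> 11 \<Longrightarrow> p \<le> snd (P0!r) \<and> snd (P0!r) \<le> p + 11"
begin

definition M :: nat where "M = n + 12 * k"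

definition c :: "nat \<Rightarrow> vtx" where
  "c i = (if i \<le> n then X ! i else rhov m (12 * int ((i - n - 1) div 12)) (P0 ! ((i - n - 1) mod 12 + 1)))"

lemma mM: "m = int M" using mdef pn by (simp add: M_def)
lemma mpos: "m > 0" using mdef pn n11 k1 by simp

lemma Pverts: "r < 13 \<Longrightarrow> P0 ! r \<in> verts m"
  using Pd Plen by (auto simp: dipath_def)
lemma Xverts: "i \<le> n \<Longrightarrow> X ! i \<in> verts m"
  using Xd Xlen by (auto simp: dipath_def)

lemma Pr: "r \<le> 11 \<Longrightarrow> p \<le> snd (P0!r) \<and> snd (P0!r) \<le> p + 11"
  using Pmid[of r] P00 tlo thi by (cases "r = 0") auto

lemma c_gt: "n < i \<Longrightarrow> c i = rhov m (12 * int ((i - n - 1) div 12)) (P0 ! ((i - n - 1) mod 12 + 1))"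
  by (simp add: c_def)

lemma c_B: assumes "n \<le> i" shows "c i = rhov m (12 * int ((i - n) div 12)) (P0 ! ((i - n) mod 12))"
proof (cases "i = n")
  case True
  then show ?thesis using Xn P00 rhov_0[OF Pverts[of 0]] by (simp add: c_def)
next
  case False
  define q where "q = i - n - 1"
  have iq: "i - n = Suc q" using False assms q_def by simp
  show ?thesis
  proof (cases "q mod 12 = 11")
    case True
    then have "Suc q div 12 = Suc (q div 12) \<and> Suc q mod 12 = 0" by (rule suc_div12b)
    moreover have "c i = rhov m (12 * int (q div 12)) (P0 ! 12)"
      using c_gt[of i] False assms True unfolding q_def by simp
    ultimately show ?thesis unfolding iq using P12 by (simp add: rhov_add algebra_simps)
  next
    case F: False
    have "q mod 12 < 12" by simp
    then have "q mod 12 < 11" using F by linarith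
    then have "Suc q div 12 = q div 12 \<and> Suc q mod 12 = Suc (q mod 12)" by (rule suc_div12a)
    moreover have "c i = rhov m (12 * int (q div 12)) (P0 ! (q mod 12 + 1))"
      using c_gt[of i] False assms unfolding q_def by simp
    ultimately show ?thesis unfolding iq by simp
  qed
qed

lemma c_Bval: assumes "n \<le> i" "i < M"
  shows "(i - n) div 12 < k" "c i = (fst (P0 ! ((i - n) mod 12)), snd (P0 ! ((i - n) mod 12)) + 12 * int ((i - n) div 12))"
proof -
  define j where "j = (i - n) div 12"
  define r where "r = (i - n) mod 12"
  have ir: "i - n = 12 * j + r" by (simp add: j_def r_def)
  have r11: "r \<le> 11" by (simp add: r_def)
  have "i - n < 12 * k" using assms by (simp add: M_def)
  then show jk: "j < k" using ir by linarith
  then have "int j \<le> int k - 1" by linarith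
  then have "snd (P0 ! r) + 12 * int j < m" "0 \<le> snd (P0 ! r) + 12 * int j"
    using Pr[OF r11] mdef pn by linarith+
  then show "c i = (fst (P0 ! ((i - n) mod 12)), snd (P0 ! ((i - n) mod 12)) + 12 * int ((i - n) div 12))"
    using c_B[OF assms(1)] unfolding j_def[symmetric] r_def[symmetric]
    by (simp add: rhov_def)
qed

lemma c_M: "c M = X ! 0"
proof -
  have "n < M" using k1 by (simp add: M_def)
  then have "c M = rhov m (12 * int (k - 1)) (P0 ! 12)"
  proof -
    have e: "M - n - 1 = 11 + 12 * (k - 1)" using k1 unfolding M_def by simp
    have "(M - n - 1) div 12 = k - 1 \<and> (M - n - 1) mod 12 = 11" unfolding e by simp
    then show ?thesis using \<open>n < M\<close> by (simp add: c_def)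
  qed
  also have "\<dots> = rhov m (12 * int k) (b, t)" using P12 P00 k1 by (simp add: rhov_add algebra_simps)
  also have "\<dots> = (b, t - p)"
  proof -
    have "(t + 12 * int k) mod m = (t - p + m) mod m" using mdef by (simp add: algebra_simps)
    also have "\<dots> = (t - p) mod m" by simp
    also have "\<dots> = t - p" using tlo thi mdef pn n11 k1 by (intro mod_pos_pos_trivial) simp_all
    finally show ?thesis by (simp add: rhov_def)
  qed
  finally show ?thesis using X0 by simp
qed

lemma c_verts: "i \<le> M \<Longrightarrow> c i \<in> verts m"
  using Xverts rhov_verts[OF mpos] by (auto simp: c_def)

lemma c_arc: assumes "i < M" shows "arc m (c i) (c (Suc i))"
proof (cases "i < n")
  case True
  then have "arc m (X ! i) (X ! Suc i)" using Xd Xlen by (auto simp: dipath_def arcs_ok_def)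
  then show ?thesis using True by (simp add: c_def)
next
  case False
  have r: "(i - n) mod 12 < 12" by simp
  have "arc m (P0 ! ((i - n) mod 12)) (P0 ! Suc ((i - n) mod 12))"
    using Pd Plen r by (auto simp: dipath_def arcs_ok_def)
  from rhov_arc[OF this, of "12 * int ((i - n) div 12)"]
  show ?thesis using False c_B[of i] c_gt[of "Suc i"] by (simp add: Suc_diff_le)
qed

lemma c_A: "i < n \<Longrightarrow> c i = X ! i \<and> 0 \<le> snd (c i) \<and> snd (c i) \<le> p - 1"
  using Xlow by (simp add: c_def)

lemma c_inj: "inj_on c {1..M}"
proof (rule inj_onI)
  fix i i' assume i: "i \<in> {1..M}" and i': "i' \<in> {1..M}" and e: "c i = c i'"
  have dX: "distinct X" using Xd by (simp add: dipath_def)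
  have dP: "distinct P0" using Pd by (simp add: dipath_def)
  have snB: "n \<le> i \<Longrightarrow> i < M \<Longrightarrow> p \<le> snd (c i)" for i
  proof -
    assume a: "n \<le> i" "i < M"
    have "(i - n) mod 12 \<le> 11" by simp
    then have "p \<le> snd (P0 ! ((i - n) mod 12))" using Pr by blast
    moreover have "0 \<le> 12 * int ((i - n) div 12)" by simp
    ultimately show ?thesis using c_Bval(2)[OF a] by simp
  qed
  have sM: "snd (c M) \<le> p - 1" using c_M Xlow[of 0] n11 by simp
  have AA: "i < n \<Longrightarrow> i' < n \<Longrightarrow> i = i'"
  proof -
    assume a: "i < n" "i' < n"
    then have "X ! i = X ! i'" using e c_A[of i] c_A[of i'] by simp
    then show "i = i'" using nth_eq_iff_index_eq[OF dX, of i i'] a Xlen by simp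
  qed
  have AM: "i < n \<Longrightarrow> i' = M \<Longrightarrow> False"
  proof -
    assume a: "i < n" "i' = M"
    then have "X ! i = X ! 0" using e c_A[of i] c_M by simp
    then show False using nth_eq_iff_index_eq[OF dX, of i 0] a Xlen i by simp
  qed
  have MA: "i' < n \<Longrightarrow> i = M \<Longrightarrow> False"
  proof -
    assume a: "i' < n" "i = M"
    then have "X ! i' = X ! 0" using e c_A[of i'] c_M by simp
    then show False using nth_eq_iff_index_eq[OF dX, of i' 0] a Xlen i' by simp
  qed
  have BB: "n \<le> i \<Longrightarrow> i < M \<Longrightarrow> n \<le> i' \<Longrightarrow> i' < M \<Longrightarrow> i = i'"
  proof -
    assume a: "n \<le> i" "i < M" "n \<le> i'" "i' < M"
    define j where "j = (i - n) div 12"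
    define r where "r = (i - n) mod 12"
    define j' where "j' = (i' - n) div 12"
    define r' where "r' = (i' - n) mod 12"
    have v: "P0 ! r = (fst (c i), snd (c i) - 12 * int j)" "P0 ! r' = (fst (c i'), snd (c i') - 12 * int j')"
      using c_Bval(2)[OF a(1,2)] c_Bval(2)[OF a(3,4)] by (simp_all add: j_def r_def j'_def r'_def)
    have b: "p \<le> snd (P0 ! r)" "snd (P0 ! r) \<le> p + 11" "p \<le> snd (P0 ! r')" "snd (P0 ! r') \<le> p + 11"
      using Pr[of r] Pr[of r'] by (simp_all add: r_def r'_def)
    have jj: "j = j'"
    proof (rule ccontr)
      assume "j \<noteq> j'"
      then consider "j < j'" | "j' < j" by linarith
      then show False
      proof cases
        case 1 then have "int j + 1 \<le> int j'" by linarith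
        then show False using v b e by simp
      next
        case 2 then have "int j' + 1 \<le> int j" by linarith
        then show False using v b e by simp
      qed
    qed
    then have "P0 ! r = P0 ! r'" using v e by simp
    then have "r = r'" using dP Plen by (simp add: nth_eq_iff_index_eq r_def r'_def)
    then have "i - n = i' - n" using jj j_def j'_def r_def r'_def
      by (metis div_mult_mod_eq)
    then show "i = i'" using a by simp
  qed
  consider "i < n" | "n \<le> i \<and> i < M" | "i = M" using i by fastforce
  then show "i = i'"
  proof cases
    case 1
    consider "i' < n" | "n \<le> i' \<and> i' < M" | "i' = M" using i' by fastforce
    then show ?thesis
      using 1 AA AM snB[of i'] c_A[of i] e by cases auto
  next
    case 2
    consider "i' < n" | "n \<le> i' \<and> i' < M" | "i' = M" using i' by fastforce
    then show ?thesis
      using 2 BB snB[of i] c_A[of i'] sM e by cases auto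
  next
    case 3
    consider "i' < n" | "n \<le> i' \<and> i' < M" | "i' = M" using i' by fastforce
    then show ?thesis
      using 3 MA snB[of i'] sM e by cases auto
  qed
qed

end



context cyc begin

lemma tl_block: "tl (rho_pow m (12 * int N) P0) = map c [n + 12 * N + 1..<n + 12 * N + 1 + 12]"
proof (rule nth_equalityI)
  show "length (tl (rho_pow m (12 * int N) P0)) = length (map c [n + 12 * N + 1..<n + 12 * N + 1 + 12])"
    using Plen by simp
next
  fix r assume "r < length (tl (rho_pow m (12 * int N) P0))"
  then have r: "r < 12" using Plen by simp
  have e: "n + 12 * N + 1 + r - n - 1 = r + 12 * N" by simp
  have "(r + 12 * N) div 12 = N" "(r + 12 * N) mod 12 = r" using r by simp_all
  then have "c (n + 12 * N + 1 + r) = rhov m (12 * int N) (P0 ! Suc r)"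
    using c_gt[of "n + 12 * N + 1 + r"] unfolding e by simp
  then show "tl (rho_pow m (12 * int N) P0) ! r = map c [n + 12 * N + 1..<n + 12 * N + 1 + 12] ! r"
    using r Plen by (simp add: nth_tl rho_pow_nth)
qed

lemma C_gen: "X @ concat (map (\<lambda>j. tl (rho_pow m (12 * int j) P0)) [0..<N]) = map c [0..<n + 12 * N + 1]"
proof (induction N)
  case 0
  show ?case
  proof (rule nth_equalityI)
    show "length (X @ concat (map (\<lambda>j. tl (rho_pow m (12 * int j) P0)) [0..<0])) = length (map c [0..<n + 12 * 0 + 1])"
      using Xlen by simp
    fix i assume "i < length (X @ concat (map (\<lambda>j. tl (rho_pow m (12 * int j) P0)) [0..<0]))"
    then have "i \<le> n" using Xlen by simp
    then show "(X @ concat (map (\<lambda>j. tl (rho_pow m (12 * int j) P0)) [0..<0])) ! i = map c [0..<n + 12 * 0 + 1] ! i"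
      by (simp add: c_def nth_append del: upt_Suc)
  qed
next
  case (Suc N)
  have e: "n + 12 * Suc N + 1 = n + 12 * N + 1 + 12" by simp
  have u: "[0..<n + 12 * Suc N + 1] = [0..<n + 12 * N + 1] @ [n + 12 * N + 1..<n + 12 * N + 1 + 12]"
    unfolding e by (rule upt_add_eq_append) simp
  have "[0..<Suc N] = [0..<N] @ [N]" by simp
  then show ?case using Suc.IH tl_block[of N] unfolding u by (simp del: upt_Suc)
qed

lemma C_eq: "foldl cat X (map (\<lambda>j. rho_pow m (12 * int j) P0) [0..<k]) = map c [0..<M + 1]"
  using C_gen[of k] by (simp add: foldl_cat M_def o_def)

lemma c_snB: assumes "n \<le> i" "i < M"
  shows "p + 12 * int ((i - n) div 12) \<le> snd (c i)" "snd (c i) \<le> p + 12 * int ((i - n) div 12) + 11"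
proof -
  have "(i - n) mod 12 \<le> 11" by simp
  then have "p \<le> snd (P0 ! ((i - n) mod 12)) \<and> snd (P0 ! ((i - n) mod 12)) \<le> p + 11" using Pr by blast
  then show "p + 12 * int ((i - n) div 12) \<le> snd (c i)" "snd (c i) \<le> p + 12 * int ((i - n) div 12) + 11"
    using c_Bval(2)[OF assms] by simp_all
qed

lemma c0: "c 0 = X ! 0" by (simp add: c_def)

lemma c_desc: assumes "i < M" shows "snd (c (Suc i)) < snd (c i) \<longleftrightarrow> i = M - 1"
proof (cases "Suc i = M")
  case True
  have "n \<le> i" using True k1 by (simp add: M_def)
  then have "p \<le> snd (c i)" using c_snB(1)[of i] assms by simp
  moreover have "snd (c M) \<le> p - 1" using c_M Xlow[of 0] n11 by simp
  ultimately show ?thesis using True by simp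
next
  case False
  then have si: "Suc i < M" using assms by simp
  have m20: "m \<ge> p + 12" using mdef k1 by simp
  have "\<not> snd (c (Suc i)) < snd (c i)"
  proof
    assume d: "snd (c (Suc i)) < snd (c i)"
    have g: "snd (c i) - snd (c (Suc i)) \<ge> m - 3" using arc_desc[OF c_arc[OF assms] d] .
    show False
    proof (cases "i < n")
      case True
      have "snd (c i) \<le> p - 1" using c_A[OF True] by blast
      moreover have "0 \<le> snd (c (Suc i))" using c_verts[of "Suc i"] si by (simp add: verts_def)
      ultimately show False using g m20 by linarith
    next
      case F: False
      have "(i - n) div 12 \<le> (Suc i - n) div 12" by (intro div_le_mono) simp
      then have "int ((i - n) div 12) \<le> int ((Suc i - n) div 12)" by simp
      moreover have "snd (c i) \<le> p + 12 * int ((i - n) div 12) + 11" using c_snB(2)[of i] F assms by simp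
      moreover have "p + 12 * int ((Suc i - n) div 12) \<le> snd (c (Suc i))" using c_snB(1)[of "Suc i"] F si by simp
      moreover have "p \<ge> 11" using pn n11 by simp
      ultimately show False using g m20 by linarith
    qed
  qed
  then show ?thesis using False assms by auto
qed

lemma C_type: "type_cycle m 1 (map c [0..<M + 1])"
proof -
  have ne: "[0..<M+1] \<noteq> []" by simp
  have tl: "tl (map c [0..<M + 1]) = map c [1..<M + 1]" by (metis map_tl tl_upt One_nat_def)
  have "set [1..<M + 1] = {1..M}" by (simp only: set_upt) auto
  then have inj: "inj_on c (set [1..<M + 1])" using c_inj by simp
  have hd: "hd (map c [0..<M + 1]) = last (map c [0..<M + 1])"
    using c0 c_M by (simp add: hd_map last_map del: upt_Suc)
  have sv: "set (map c [0..<M + 1]) \<subseteq> verts m" using c_verts by auto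
  have ar: "arcs_ok m (map c [0..<M + 1])" unfolding arcs_ok_def
    using c_arc by (simp del: upt_Suc)
  have dc: "dcycle m (map c [0..<M + 1])"
    unfolding dcycle_def using hd sv ar tl inj mM by (simp add: distinct_map del: upt_Suc)
  have "diff_sum m (map c [0..<M + 1]) = (\<Sum>i<M. adiff m (c i) (c (Suc i)))"
    unfolding diff_sum_def by (intro sum.cong) (simp_all del: upt_Suc)
  also have "\<dots> = (\<Sum>i<M. (snd (c (Suc i)) - snd (c i)) + (if i = M - 1 then m else 0))"
  proof (intro sum.cong refl)
    fix i assume "i \<in> {..<M}"
    then have i: "i < M" by simp
    show "adiff m (c i) (c (Suc i)) = (snd (c (Suc i)) - snd (c i)) + (if i = M - 1 then m else 0)"
      using adiff_eq[OF c_verts c_verts, of i "Suc i"] c_desc[OF i] i by simp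
  qed
  also have "\<dots> = (\<Sum>i<M. snd (c (Suc i)) - snd (c i)) + (\<Sum>i<M. if i = M - 1 then m else 0)"
    by (rule sum.distrib)
  also have "\<dots> = (snd (c M) - snd (c 0)) + m"
  proof -
    have "M - 1 \<in> {..<M}" using k1 by (simp add: M_def)
    then have "(\<Sum>i<M. if i = M - 1 then m else 0) = m" by simp
    then show ?thesis using sum_lessThan_telescope[of "\<lambda>i. snd (c i)" M] by simp
  qed
  also have "\<dots> = m" using c0 c_M by simp
  finally show ?thesis using dc by (simp add: type_cycle_def)
qed

lemma C_set: "set (map c [0..<M + 1]) \<subseteq> {v \<in> set X. snd v \<le> p - 1} \<union>
   {(fst (P0 ! r), snd (P0 ! r) + 12 * int j) | r j. r \<le> 11 \<and> j < k}"
proof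
  fix v assume "v \<in> set (map c [0..<M + 1])"
  then have "v \<in> c ` {0..<M+1}" by (simp del: upt_Suc)
  then obtain i where i0: "i < M + 1" "v = c i" by auto
  then have i: "i \<le> M" by simp
  consider "i < n" | "n \<le> i \<and> i < M" | "i = M" using i by linarith
  then show "v \<in> {v \<in> set X. snd v \<le> p - 1} \<union>
   {(fst (P0 ! r), snd (P0 ! r) + 12 * int j) | r j. r \<le> 11 \<and> j < k}"
  proof cases
    case 1
    have "X ! i \<in> set X" using 1 Xlen by simp
    moreover have "snd (X ! i) \<le> p - 1" using Xlow[OF 1] by blast
    moreover have "v = X ! i" using c_A[OF 1] i0 by simp
    ultimately show ?thesis by blast
  next
    case 2
    then have "(i - n) mod 12 \<le> 11" "(i - n) div 12 < k" using c_Bval(1)[of i] by auto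
    moreover have "v = (fst (P0 ! ((i - n) mod 12)), snd (P0 ! ((i - n) mod 12)) + 12 * int ((i - n) div 12))"
      using c_Bval(2)[of i] 2 i0 by simp
    ultimately show ?thesis by blast
  next
    case 3
    have "X ! 0 \<in> set X" using Xlen by simp
    moreover have "snd (X ! 0) \<le> p - 1" using Xlow[of 0] n11 by simp
    moreover have "v = X ! 0" using c_M 3 i0 by simp
    ultimately show ?thesis by blast
  qed
qed

end



lemma basic_cyc:
  assumes p: "p \<in> {11, 13, 17, 19}" and md: "m = p + 12 * int k" and k1: "1 \<le> k"
    and Xd: "dipath m X" and Xne: "X \<noteq> []" and Xh: "hd X = rhov m (- p) (last X)" and Xl: "int (len X) = p"
    and Xb: "set (butlast X) \<subseteq> Vblock m p 0"
    and Xt: "snd (last X) \<in> {p mod m, (p + 1) mod m, (p + 2) mod m}"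
    and Pd: "dipath m P0" and Pl: "len P0 = 12" and XP: "last X = hd P0"
    and Pt: "last P0 = rhov m 12 (hd P0)" and Pb: "set (butlast (tl P0)) \<subseteq> Vblock m p 1"
  shows "cyc m p (nat p) k X P0 (fst (last X)) (snd (last X))"
proof -
  have p11: "11 \<le> p" "p \<le> 19" using p by auto
  have mbig: "p + 12 \<le> m" using md k1 by simp
  have Xlen: "length X = nat p + 1" using Xl Xne p11 by (simp add: len_def)
  have P0ne: "P0 \<noteq> []" using Pd by (simp add: dipath_def)
  have Plen: "length P0 = 13" using Pl P0ne by (simp add: len_def)
  have lX: "last X = X ! nat p" using Xlen Xne by (simp add: last_conv_nth)
  have tt: "snd (last X) \<in> {p, p + 1, p + 2}"
  proof -
    have "p mod m = p" "(p + 1) mod m = p + 1" "(p + 2) mod m = p + 2"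
      using p11 mbig by (simp_all add: mod_pos_pos_trivial)
    then show ?thesis using Xt by simp
  qed
  have X0: "X ! 0 = (fst (last X), snd (last X) - p)"
  proof -
    have "(snd (last X) - p) mod m = snd (last X) - p" using tt mbig p11 by (intro mod_pos_pos_trivial) auto
    then show ?thesis using Xh Xne by (simp add: hd_conv_nth rhov_def)
  qed
  show ?thesis
  proof (unfold_locales)
    show "p = int (nat p)" using p11 by simp
    show "11 \<le> nat p" using p11 by simp
    show "1 \<le> k" by fact
    show "m = p + 12 * int k" by fact
    show "dipath m X" by fact
    show "length X = nat p + 1" by fact
    show "0 \<le> snd (X ! i) \<and> snd (X ! i) \<le> p - 1" if i: "i < nat p" for i
    proof -
      have "butlast X ! i = X ! i" using i Xlen by (simp add: nth_butlast)
      moreover have "butlast X ! i \<in> set (butlast X)" using i Xlen by simp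
      ultimately have "X ! i \<in> Vblock m p 0" using Xb by auto
      then show ?thesis by (simp add: Vblock_def)
    qed
    show "X ! nat p = (fst (last X), snd (last X))" using lX by simp
    show "p \<le> snd (last X)" "snd (last X) \<le> p + 2" using tt by auto
    show "X ! 0 = (fst (last X), snd (last X) - p)" by (rule X0)
    show "dipath m P0" by fact
    show "length P0 = 13" by fact
    show "P0 ! 0 = (fst (last X), snd (last X))" using XP P0ne by (simp add: hd_conv_nth)
    show "P0 ! 12 = rhov m 12 (P0 ! 0)" using Pt P0ne Plen by (simp add: hd_conv_nth last_conv_nth)
    show "p \<le> snd (P0 ! r) \<and> snd (P0 ! r) \<le> p + 11" if r: "1 \<le> r" "r \<le> 11" for r
    proof -
      have "butlast (tl P0) ! (r - 1) = P0 ! r" using r Plen by (simp add: nth_butlast nth_tl)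
      moreover have "butlast (tl P0) ! (r - 1) \<in> set (butlast (tl P0))" using r Plen by simp
      ultimately have "P0 ! r \<in> Vblock m p 1" using Pb by auto
      then show ?thesis by (simp add: Vblock_def)
    qed
  qed
qed

lemma disjB:
  fixes P Q :: "vtx list"
  assumes "set X \<inter> set Y = {}" "set P \<inter> set Q = {}" "length P = 13" "length Q = 13"
    and hP: "\<And>r. r \<le> 11 \<Longrightarrow> p \<le> snd (P ! r) \<and> snd (P ! r) \<le> p + 11"
    and hQ: "\<And>r. r \<le> 11 \<Longrightarrow> p \<le> snd (Q ! r) \<and> snd (Q ! r) \<le> p + 11"
  shows "({v \<in> set X. snd v \<le> p - 1} \<union> {(fst (P ! r), snd (P ! r) + 12 * int j) | r j. r \<le> 11 \<and> j < k})
       \<inter> ({v \<in> set Y. snd v \<le> p - 1} \<union> {(fst (Q ! r), snd (Q ! r) + 12 * int j) | r j. r \<le> 11 \<and> j < k}) = {}"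
proof -
  have BB: False if "(fst (P ! r), snd (P ! r) + 12 * int j) = (fst (Q ! r'), snd (Q ! r') + 12 * int j')"
    "r \<le> 11" "r' \<le> 11" for r j r' j'
  proof -
    have b: "p \<le> snd (P ! r)" "snd (P ! r) \<le> p + 11" "p \<le> snd (Q ! r')" "snd (Q ! r') \<le> p + 11"
      using hP[OF that(2)] hQ[OF that(3)] by auto
    have e: "snd (P ! r) + 12 * int j = snd (Q ! r') + 12 * int j'" using that(1) by simp
    have jj: "j = j'"
    proof (rule ccontr)
      assume "j \<noteq> j'"
      then consider "int j + 1 \<le> int j'" | "int j' + 1 \<le> int j" by linarith
      then show False using b e by cases linarith+
    qed
    then have "P ! r = Q ! r'" using that(1) e by (simp add: prod_eq_iff)
    moreover have "P ! r \<in> set P" "Q ! r' \<in> set Q" using that assms(3,4) by simp_all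
    ultimately show False using assms(2) by auto
  qed
  have XB: False if "v \<in> set X" "snd v \<le> p - 1" "v = (fst (Q ! r), snd (Q ! r) + 12 * int j)" "r \<le> 11" for v r j
    using that hQ[OF that(4)] by simp
  have YB: False if "v \<in> set Y" "snd v \<le> p - 1" "v = (fst (P ! r), snd (P ! r) + 12 * int j)" "r \<le> 11" for v r j
    using that hP[OF that(4)] by simp
  show ?thesis using assms(1) BB XB YB by blast
qed




lemma disj_sub: "A' \<subseteq> A \<Longrightarrow> B' \<subseteq> B \<Longrightarrow> A \<inter> B = {} \<Longrightarrow> A' \<inter> B' = {}" by blast

theorem mainTheorem6:
  fixes m p :: int and k :: nat and X Y P0 Q0 :: "vtx list"
  assumes "p \<in> {11, 13, 17, 19}"
    and "m = p + 12 * int k"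
    and "type1_basic_set m p k X Y P0 Q0"
  shows "type_cycle m 1 (foldl cat X (map (\<lambda>j. rho_pow m (12 * int j) P0) [0..<k]))
       \<and> type_cycle m 1 (foldl cat Y (map (\<lambda>j. rho_pow m (12 * int j) Q0) [0..<k]))
       \<and> Cm_factor m [foldl cat X (map (\<lambda>j. rho_pow m (12 * int j) P0) [0..<k]),
                     foldl cat Y (map (\<lambda>j. rho_pow m (12 * int j) Q0) [0..<k])]"
proof -
  note H = assms(3)[unfolded type1_basic_set_def]
  have mpos: "m > 0" using assms(1,2) by auto
  show ?thesis
  proof (cases "k = 0")
    case True
    then have "type_cycle m 1 X" "type_cycle m 1 Y" "set X \<inter> set Y = {}" using H by blast+
    then show ?thesis using True factor2[of m X Y] mpos by (simp add: type_cycle_def)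
  next
    case False
    then have k1: "1 \<le> k" by simp
    have C4: "\<forall>P \<in> {X, Y}. set (butlast P) \<subseteq> Vblock m p 0 \<and>
        snd (last P) \<in> {p mod m, (p + 1) mod m, (p + 2) mod m}" using H by blast
    have HX: "set (butlast X) \<subseteq> Vblock m p 0 \<and> snd (last X) \<in> {p mod m, (p + 1) mod m, (p + 2) mod m}"
      "set (butlast Y) \<subseteq> Vblock m p 0 \<and> snd (last Y) \<in> {p mod m, (p + 1) mod m, (p + 2) mod m}"
      using C4 by blast+
    have C6: "k \<ge> 1 \<longrightarrow> (\<forall>P \<in> {P0, Q0}. last P = rhov m 12 (hd P) \<and>
        set (butlast (tl P)) \<subseteq> Vblock m p 1)" using H by blast
    have HP: "last P0 = rhov m 12 (hd P0) \<and> set (butlast (tl P0)) \<subseteq> Vblock m p 1"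
      "last Q0 = rhov m 12 (hd Q0) \<and> set (butlast (tl Q0)) \<subseteq> Vblock m p 1"
      using C6 k1 by blast+
    have C1: "k \<ge> 1 \<longrightarrow> dipath m X \<and> dipath m Y \<and> set X \<inter> set Y = {}" using H by blast
    have C3: "k \<ge> 1 \<longrightarrow> len P0 = 12 \<and> len Q0 = 12" using H by blast
    have H1: "dipath m X" "dipath m Y" "set X \<inter> set Y = {}" "len P0 = 12" "len Q0 = 12"
      using C1 C3 k1 by blast+
    have H2: "dipath m P0" "dipath m Q0" "set P0 \<inter> set Q0 = {}" "X \<noteq> []" "Y \<noteq> []"
      "hd X = rhov m (- p) (last X)" "hd Y = rhov m (- p) (last Y)" "int (len X) = p" "int (len Y) = p"
      "last X = hd P0" "last Y = hd Q0" using H by blast+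
    interpret cX: cyc m p "nat p" k X P0 "fst (last X)" "snd (last X)"
      using basic_cyc[OF assms(1,2) k1 H1(1) H2(4) H2(6) H2(8) _ _ H2(1) H1(4) H2(10)] HX(1) HP(1) by blast
    interpret cY: cyc m p "nat p" k Y Q0 "fst (last Y)" "snd (last Y)"
      using basic_cyc[OF assms(1,2) k1 H1(2) H2(5) H2(7) H2(9) _ _ H2(2) H1(5) H2(11)] HX(2) HP(2) by blast
    have tX: "type_cycle m 1 (map cX.c [0..<cX.M + 1])" by (rule cX.C_type)
    have tY: "type_cycle m 1 (map cY.c [0..<cY.M + 1])" by (rule cY.C_type)
    have PQ: "set P0 \<inter> set Q0 = {}" by (rule H2(3))
    have d: "set (map cX.c [0..<cX.M + 1]) \<inter> set (map cY.c [0..<cY.M + 1]) = {}"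
      by (rule disj_sub[OF cX.C_set cY.C_set disjB[OF H1(3) PQ cX.Plen cY.Plen cX.Pr cY.Pr, of k]])
    have "dcycle m (map cX.c [0..<cX.M + 1])" "dcycle m (map cY.c [0..<cY.M + 1])"
      using tX tY by (simp_all add: type_cycle_def)
    from factor2[OF this d mpos] have F: "Cm_factor m [map cX.c [0..<cX.M + 1], map cY.c [0..<cY.M + 1]]" .
    show ?thesis unfolding cX.C_eq cY.C_eq using tX tY F by blast
  qed
qed


end
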